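(* Let $\mathcal{L}:\mathcal{M}_2\to\mathcal{M}_2$ be a linear map with $\operatorname{Tr}\mathcal{L}(X)=0$ for all $X\in\mathcal{M}_2$, and suppose that for every $t\ge 0$ the map $e^{t\mathcal{L}^\ddagger}$ is a unital Schwarz map. Let $\ell_1,\ell_2,\ell_3$ be the eigenvalues, counted with algebraic multiplicity, of the restriction of $\mathcal{L}$ to the (invariant) subspace $\mathcal{T}=\{X\in\mathcal{M}_2:\operatorname{Tr}X=0\}$, and set $\Gamma_k=-\operatorname{Re}\ell_k$ and $\Gamma=\Gamma_1+\Gamma_2+\Gamma_3$. Then $$\Gamma_k\le \tfrac{2}{3}\,\Gamma\qquad (k=1,2,3).$$
   Context: $\mathcal{M}_n$ denotes the complex $n\times n$ matrices. For a linear map $\Lambda$ on $\mathcal{M}_n$, its dual $\Lambda^\ddagger$ is defined by $\operatorname{Tr}\big((\Lambda^\ddagger(X))^\dagger Y\big)=\operatorname{Tr}\big(X^\dagger\Lambda(Y)\big)$ for all $X,Y$. A linear map $\Phi$ on $\mathcal{M}_n$ is unital if $\Phi(\mathbb{1})=\mathbb{1}$; a unital Schwarz map is a unital linear map satisfying $\Phi(X^\dagger X)\ge\Phi(X)^\dagger\Phi(X)$ (in the positive semidefinite order) for all $X\in\mathcal{M}_n$. The numbers $\Gamma_k$ are called relaxation rates. *)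

theory Defs
  imports "HOL-Analysis.Analysis" "HOL-Computational_Algebra.Polynomial"
begin

type_synonym cmat2 = "complex^2^2"

definition mtrace :: "complex^'n^'n \<Rightarrow> complex" where
  "mtrace A = (\<Sum>i\<in>UNIV. A$i$i)"

definition cadj :: "complex^'n^'n \<Rightarrow> complex^'n^'n" where
  "cadj A = (\<chi> i j. cnj (A$j$i))"

definition cscale :: "complex \<Rightarrow> complex^'n^'m \<Rightarrow> complex^'n^'m" where
  "cscale a A = (\<chi> i j. a * A$i$j)"

definition clinear_map :: "(cmat2 \<Rightarrow> cmat2) \<Rightarrow> bool" where
  "clinear_map L \<longleftrightarrow> (\<forall>X Y. L (X + Y) = L X + L Y) \<and> (\<forall>a X. L (cscale a X) = cscale a (L X))"

definition hs_dual :: "(cmat2 \<Rightarrow> cmat2) \<Rightarrow> (cmat2 \<Rightarrow> cmat2)" where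
  "hs_dual L = (THE M. \<forall>X Y. mtrace (cadj (M X) ** Y) = mtrace (cadj X ** L Y))"

definition psd :: "complex^'n^'n \<Rightarrow> bool" where
  "psd A \<longleftrightarrow> (\<forall>v::complex^'n. Im (\<Sum>i\<in>UNIV. cnj (v$i) * (A *v v)$i) = 0
                              \<and> Re (\<Sum>i\<in>UNIV. cnj (v$i) * (A *v v)$i) \<ge> 0)"

definition unital_schwarz :: "(cmat2 \<Rightarrow> cmat2) \<Rightarrow> bool" where
  "unital_schwarz \<Phi> \<longleftrightarrow> clinear_map \<Phi> \<and> \<Phi> (mat 1) = mat 1 \<and>
     (\<forall>X. psd (\<Phi> (cadj X ** X) - cadj (\<Phi> X) ** \<Phi> X))"

definition map_exp :: "real \<Rightarrow> (cmat2 \<Rightarrow> cmat2) \<Rightarrow> cmat2 \<Rightarrow> cmat2" where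
  "map_exp t L X = (\<Sum>n. (t ^ n / fact n) *\<^sub>R (L ^^ n) X)"

definition pauli :: "3 \<Rightarrow> cmat2" where
  "pauli k = (if k = 1 then (\<chi> i j. if i \<noteq> j then 1 else 0)
              else if k = 2 then (\<chi> i j. if i = 1 \<and> j = 2 then - \<i> else if i = 2 \<and> j = 1 then \<i> else 0)
              else (\<chi> i j. if i = j then (if i = 1 then 1 else -1) else 0))"

text \<open>Matrix of the restriction of L to T in the Pauli basis
  (coordinate of a traceless X along pauli i is Tr(pauli i * X)/2).\<close>
definition restr_T_matrix :: "(cmat2 \<Rightarrow> cmat2) \<Rightarrow> complex^3^3" where
  "restr_T_matrix L = (\<chi> i j. mtrace (pauli i ** L (pauli j)) / 2)"

definition char_poly3 :: "complex^3^3 \<Rightarrow> complex poly" where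
  "char_poly3 M = det ((\<chi> i j. (if i = j then [:0, 1:] else 0) - [:M$i$j:]) :: complex poly^3^3)"

end

theory Submission
  imports Defs
begin


definition hsip :: "cmat2 \<Rightarrow> cmat2 \<Rightarrow> complex" where
  "hsip A B = cnj (A$1$1) * B$1$1 + cnj (A$1$2) * B$1$2 + cnj (A$2$1) * B$2$1 + cnj (A$2$2) * B$2$2"

lemma mtrace_cadj: "mtrace (cadj A ** (B::cmat2)) = hsip A B"
  by (simp add: mtrace_def cadj_def matrix_matrix_mult_def sum_2 hsip_def algebra_simps)

definition Emat :: "2 \<Rightarrow> 2 \<Rightarrow> cmat2" where "Emat i j = (\<chi> a b. if a = i \<and> b = j then 1 else 0)"

lemma decomp: "(Y::cmat2) = cscale (Y$1$1) (Emat 1 1) + cscale (Y$1$2) (Emat 1 2) + cscale (Y$2$1) (Emat 2 1) + cscale (Y$2$2) (Emat 2 2)"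
  by (simp add: vec_eq_iff forall_2 cscale_def Emat_def)

lemma L_decomp: assumes "clinear_map L"
  shows "L Y = cscale (Y$1$1) (L (Emat 1 1)) + cscale (Y$1$2) (L (Emat 1 2)) + cscale (Y$2$1) (L (Emat 2 1)) + cscale (Y$2$2) (L (Emat 2 2))"
proof -
  have "L Y = L (cscale (Y$1$1) (Emat 1 1) + cscale (Y$1$2) (Emat 1 2) + cscale (Y$2$1) (Emat 2 1) + cscale (Y$2$2) (Emat 2 2))"
    using decomp[of Y] by simp
  thus ?thesis using assms unfolding clinear_map_def by simp
qed

definition dualf :: "(cmat2 \<Rightarrow> cmat2) \<Rightarrow> cmat2 \<Rightarrow> cmat2" where
  "dualf L X = (\<chi> i j. hsip (L (Emat i j)) X)"

lemma cnj_hsip: "cnj (hsip A B) = hsip B A"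
  by (simp add: hsip_def mult.commute)

lemma hsip_E: "hsip A (Emat i j) = cnj (A$i$j)"
  using exhaust_2[of i] exhaust_2[of j] by (auto simp: hsip_def Emat_def)

lemma dual_prop: assumes "clinear_map L"
  shows "hsip (dualf L X) Y = hsip X (L Y)"
  apply (subst L_decomp[OF assms])
  apply (simp add: hsip_def dualf_def cscale_def)
  apply (simp add: algebra_simps)
  done

lemma hs_dual_eq: assumes "clinear_map L" shows "hs_dual L = dualf L"
  unfolding hs_dual_def
proof (rule the_equality)
  show "\<forall>X Y. mtrace (cadj (dualf L X) ** Y) = mtrace (cadj X ** L Y)"
    by (simp add: mtrace_cadj dual_prop[OF assms])
next
  fix M assume H: "\<forall>X Y. mtrace (cadj (M X) ** Y) = mtrace (cadj X ** L Y)"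
  show "M = dualf L"
  proof (rule ext)
    fix X
    show "M X = dualf L X"
    proof (simp add: vec_eq_iff, intro allI)
      fix i j
      have "hsip (M X) (Emat i j) = hsip X (L (Emat i j))" using H by (simp add: mtrace_cadj)
      hence "cnj (M X $ i $ j) = hsip X (L (Emat i j))" by (simp add: hsip_E)
      hence "M X $ i $ j = cnj (hsip X (L (Emat i j)))" by (metis complex_cnj_cnj)
      thus "M X $ i $ j = dualf L X $ i $ j" by (simp add: dualf_def cnj_hsip)
    qed
  qed
qed

lemma scaleR_cscale: "r *\<^sub>R (X::cmat2) = cscale (complex_of_real r) X"
  by (simp add: vec_eq_iff cscale_def) (simp add: scaleR_conv_of_real)

lemma dualf_clinear: "clinear_map (dualf L)"
  unfolding clinear_map_def by (simp add: dualf_def hsip_def vec_eq_iff cscale_def algebra_simps)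

lemma clinear_linear: "clinear_map F \<Longrightarrow> linear F"
  unfolding clinear_map_def by (intro linearI) (simp_all add: scaleR_cscale)

lemma clinear_bounded: "clinear_map F \<Longrightarrow> bounded_linear F"
  using clinear_linear linear_conv_bounded_linear by blast

lemma pow_bound:
  fixes F :: "'a::real_normed_vector \<Rightarrow> 'a"
  assumes C: "\<And>Z. norm (F Z) \<le> norm Z * C" and C0: "C \<ge> 0"
  shows "norm ((F ^^ n) Z) \<le> C ^ n * norm Z"
proof (induction n)
  case 0 show ?case by (simp add: funpow_0)
next
  case (Suc n)
  have "norm ((F ^^ Suc n) Z) = norm (F ((F^^n) Z))" by simp
  also have "\<dots> \<le> norm ((F^^n) Z) * C" by (rule C)
  also have "\<dots> \<le> C^n * norm Z * C" using Suc C0 by (rule mult_right_mono)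
  finally show ?case by (simp add: algebra_simps)
qed

lemma exp_rem_bound:
  fixes F :: "cmat2 \<Rightarrow> cmat2"
  assumes bl: "bounded_linear F"
  shows "\<exists>K. \<forall>t. 0 \<le> t \<and> t \<le> 1 \<longrightarrow> norm (map_exp t F Y - Y - t *\<^sub>R F Y) \<le> t^2 * K"
proof -
  obtain C where C: "\<And>Z. norm (F Z) \<le> norm Z * C" and Cp: "C > 0"
    using bounded_linear.pos_bounded[OF bl] by blast
  define b where "b n = C^n / fact n * norm Y" for n
  have b0: "b n \<ge> 0" for n using Cp by (simp add: b_def)
  have sb: "summable b"
    using summable_mult2[OF summable_exp[of C], of "norm Y"] unfolding b_def by (simp add: field_simps)
  define K where "K = (\<Sum>n. b (n+2))"
  have sb2: "summable (\<lambda>n. b (n+2))" using sb by (rule summable_ignore_initial_segment)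
  show ?thesis
  proof (intro exI allI impI)
    fix t :: real assume t: "0 \<le> t \<and> t \<le> 1"
    define a where "a n = (t ^ n / fact n) *\<^sub>R (F ^^ n) Y" for n
    have an: "norm (a n) \<le> t^n * b n" for n
    proof -
      have "norm (a n) = t^n / fact n * norm ((F^^n) Y)" using t by (simp add: a_def)
      also have "\<dots> \<le> t^n / fact n * (C^n * norm Y)"
        using pow_bound[OF C, of n Y] Cp t by (intro mult_left_mono) auto
      finally show ?thesis by (simp add: b_def)
    qed
    have an2: "norm (a n) \<le> b n" for n
    proof -
      have "t^n \<le> 1" using t by (simp add: power_le_one)
      hence "t^n * b n \<le> b n" using b0[of n] by (simp add: mult_left_le_one_le t)
      thus ?thesis using an[of n] by linarith
    qed
    have sa: "summable a" by (rule summable_comparison_test'[OF sb]) (rule an2)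
    have "map_exp t F Y = suminf a" unfolding map_exp_def by (rule arg_cong[where f=suminf]) (simp add: fun_eq_iff a_def)
    also have "\<dots> = (\<Sum>n. a (n+2)) + (\<Sum>i<2. a i)" by (rule suminf_split_initial_segment[OF sa])
    also have "(\<Sum>i<2. a i) = Y + t *\<^sub>R F Y" by (simp add: a_def numeral_2_eq_2)
    finally have eq: "map_exp t F Y - Y - t *\<^sub>R F Y = (\<Sum>n. a (n+2))" by simp
    have "norm (\<Sum>n. a(n+2)) \<le> (\<Sum>n. t^2 * b (n+2))"
    proof (rule norm_suminf_le)
      fix n
      have "t^n \<le> 1" using t by (simp add: power_le_one)
      hence "t^2 * t^n \<le> t^2" using t by (intro mult_left_le) auto
      moreover have "t^(n+2) = t^2 * t^n" by (simp only: power_add mult.commute)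
      ultimately have "t^(n+2) \<le> t^2" by linarith
      hence "t^(n+2) * b (n+2) \<le> t^2 * b(n+2)" using b0 by (rule mult_right_mono)
      thus "norm (a (n+2)) \<le> t^2 * b (n+2)" using an[of "n+2"] by linarith
    next
      show "summable (\<lambda>n. t^2 * b (n+2))" by (rule summable_mult[OF sb2])
    qed
    also have "\<dots> = t^2 * K" unfolding K_def by (rule suminf_mult[OF sb2])
    finally show "norm (map_exp t F Y - Y - t *\<^sub>R F Y) \<le> t^2 * K" using eq by simp
  qed
qed

lemma exp_deriv_lim:
  fixes F :: "cmat2 \<Rightarrow> cmat2"
  assumes bl: "bounded_linear F"
  shows "((\<lambda>t. (1/t) *\<^sub>R (map_exp t F Y - Y)) \<longlongrightarrow> F Y) (at_right 0)"
proof -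
  obtain K where K: "\<And>t. 0 \<le> t \<and> t \<le> 1 \<Longrightarrow> norm (map_exp t F Y - Y - t *\<^sub>R F Y) \<le> t^2 * K"
    using exp_rem_bound[OF bl] by blast
  have ev: "eventually (\<lambda>t. norm ((1/t) *\<^sub>R (map_exp t F Y - Y) - F Y) \<le> t * K) (at_right (0::real))"
    unfolding eventually_at_right_field
  proof (intro exI[of _ 1] conjI allI impI)
    fix t :: real assume t: "t > 0" "t < 1"
    have "(1/t) *\<^sub>R (map_exp t F Y - Y) - F Y = (1/t) *\<^sub>R (map_exp t F Y - Y - t *\<^sub>R F Y)"
      using t by (simp add: scaleR_diff_right)
    hence "norm ((1/t) *\<^sub>R (map_exp t F Y - Y) - F Y) = (1/t) * norm (map_exp t F Y - Y - t *\<^sub>R F Y)"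
      using t by simp
    also have "\<dots> \<le> (1/t) * (t^2 * K)" using K[of t] t by (intro mult_left_mono) auto
    also have "\<dots> = t * K" using t by (simp add: power2_eq_square)
    finally show "norm ((1/t) *\<^sub>R (map_exp t F Y - Y) - F Y) \<le> t * K" .
  qed simp
  have "((\<lambda>t. t * K) \<longlongrightarrow> 0) (at_right (0::real))"
    by (intro tendsto_eq_intros) auto
  hence "((\<lambda>t. (1/t) *\<^sub>R (map_exp t F Y - Y) - F Y) \<longlongrightarrow> 0) (at_right 0)"
    by (rule Lim_null_comparison[OF ev])
  thus ?thesis by (rule LIM_zero_cancel)
qed

lemma exp_cont_lim:
  fixes F :: "cmat2 \<Rightarrow> cmat2"
  assumes bl: "bounded_linear F"
  shows "((\<lambda>t. map_exp t F Y) \<longlongrightarrow> Y) (at_right 0)"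
proof -
  have "((\<lambda>t. Y + t *\<^sub>R ((1/t) *\<^sub>R (map_exp t F Y - Y))) \<longlongrightarrow> Y + 0 *\<^sub>R F Y) (at_right 0)"
    by (intro tendsto_intros exp_deriv_lim[OF bl]) 
  moreover have "eventually (\<lambda>t. Y + t *\<^sub>R ((1/t) *\<^sub>R (map_exp t F Y - Y)) = map_exp t F Y) (at_right (0::real))"
    unfolding eventually_at_right_field by (intro exI[of _ 1]) auto
  ultimately show ?thesis by (auto intro: Lim_transform_eventually)
qed

definition qf :: "complex^2 \<Rightarrow> cmat2 \<Rightarrow> complex" where
  "qf \<psi> B = (\<Sum>i\<in>UNIV. cnj (\<psi>$i) * (B *v \<psi>)$i)"

lemma qf_expand: "qf \<psi> B = cnj(\<psi>$1)*(B$1$1*\<psi>$1 + B$1$2*\<psi>$2) + cnj(\<psi>$2)*(B$2$1*\<psi>$1+B$2$2*\<psi>$2)"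
  by (simp add: qf_def matrix_vector_mult_def sum_2)

lemma qf_diff: "qf \<psi> (A - B) = qf \<psi> A - qf \<psi> B"
  by (simp add: qf_expand algebra_simps)

lemma quot_identity:
  assumes "t \<noteq> 0"
  shows "qf \<psi> (A - cadj F ** F) / complex_of_real t = qf \<psi> ((1/t) *\<^sub>R (A - cadj X ** X)) - qf \<psi> (cadj ((1/t) *\<^sub>R (F - X)) ** F) - qf \<psi> (cadj X ** ((1/t) *\<^sub>R (F - X)))"
  using assms
  by (simp add: qf_expand cadj_def matrix_matrix_mult_def sum_2 scaleR_cscale cscale_def field_simps)

lemma cont_expr:
  assumes "(A \<longlongrightarrow> A0) F" "(B \<longlongrightarrow> B0) F" "(C \<longlongrightarrow> C0) F"
  shows "((\<lambda>t. qf \<psi> (A t) - qf \<psi> (cadj (B t) ** C t) - qf \<psi> (cadj X ** B t)) \<longlongrightarrow> qf \<psi> A0 - qf \<psi> (cadj B0 ** C0) - qf \<psi> (cadj (X::cmat2) ** B0)) F"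
  unfolding qf_expand cadj_def matrix_matrix_mult_def sum_2
  by (simp; intro tendsto_intros assms)

lemma dissip:
  fixes F :: "cmat2 \<Rightarrow> cmat2"
  assumes bl: "bounded_linear F"
    and S: "\<And>t. t \<ge> 0 \<Longrightarrow> psd (map_exp t F (cadj X ** X) - cadj (map_exp t F X) ** map_exp t F X)"
  shows "Re (qf \<psi> (F (cadj X ** X) - cadj (F X) ** X - cadj X ** F X)) \<ge> 0 \<and>
         Im (qf \<psi> (F (cadj X ** X) - cadj (F X) ** X - cadj X ** F X)) = 0"
proof -
  define \<phi> where "\<phi> t = qf \<psi> (map_exp t F (cadj X ** X) - cadj (map_exp t F X) ** map_exp t F X)" for t
  define l where "l = qf \<psi> (F (cadj X ** X)) - qf \<psi> (cadj (F X) ** X) - qf \<psi> (cadj X ** F X)"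
  have l_eq: "l = qf \<psi> (F (cadj X ** X) - cadj (F X) ** X - cadj X ** F X)"
    by (simp add: l_def qf_diff)
  have lim1: "((\<lambda>t. qf \<psi> ((1/t) *\<^sub>R (map_exp t F (cadj X ** X) - cadj X ** X))
      - qf \<psi> (cadj ((1/t) *\<^sub>R (map_exp t F X - X)) ** map_exp t F X)
      - qf \<psi> (cadj X ** ((1/t) *\<^sub>R (map_exp t F X - X)))) \<longlongrightarrow> l) (at_right 0)"
    unfolding l_def
    by (intro cont_expr exp_deriv_lim[OF bl] exp_cont_lim[OF bl])
  have ev: "eventually (\<lambda>t. qf \<psi> ((1/t) *\<^sub>R (map_exp t F (cadj X ** X) - cadj X ** X))
      - qf \<psi> (cadj ((1/t) *\<^sub>R (map_exp t F X - X)) ** map_exp t F X)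
      - qf \<psi> (cadj X ** ((1/t) *\<^sub>R (map_exp t F X - X))) = \<phi> t / complex_of_real t) (at_right (0::real))"
    unfolding eventually_at_right_field \<phi>_def
    by (intro exI[of _ 1]) (auto intro!: quot_identity[symmetric])
  have lim: "((\<lambda>t. \<phi> t / complex_of_real t) \<longlongrightarrow> l) (at_right 0)"
    by (rule Lim_transform_eventually[OF lim1 ev])
  have pos: "Re (\<phi> t) \<ge> 0 \<and> Im (\<phi> t) = 0" if "t \<ge> 0" for t
    using S[OF that] unfolding psd_def \<phi>_def qf_def by blast
  have ev2: "eventually (\<lambda>t. 0 \<le> Re (\<phi> t / complex_of_real t) \<and> Im (\<phi> t / complex_of_real t) = 0) (at_right (0::real))"
    unfolding eventually_at_right_field
    by (intro exI[of _ 1]) (auto simp: pos Re_divide_of_real Im_divide_of_real)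
  have "Re l \<ge> 0"
    by (rule tendsto_lowerbound[OF tendsto_Re[OF lim]]) (use ev2 in \<open>auto elim: eventually_mono\<close>)
  moreover have "Im l = 0"
  proof -
    have a: "((\<lambda>t. Im (\<phi> t / complex_of_real t)) \<longlongrightarrow> Im l) (at_right 0)" by (rule tendsto_Im[OF lim])
    have "((\<lambda>t. Im (\<phi> t / complex_of_real t)) \<longlongrightarrow> 0) (at_right 0)"
      by (rule Lim_transform_eventually[OF tendsto_const]) (use ev2 in \<open>auto elim: eventually_mono\<close>)
    thus ?thesis using tendsto_unique[OF _ a] by auto
  qed
  ultimately show ?thesis using l_eq by simp
qed

definition herm_mat :: "real \<Rightarrow> real \<Rightarrow> real \<Rightarrow> real \<Rightarrow> cmat2" where
 "herm_mat s a b c = (\<chi> i j. if i = 1 then (if j = 1 then complex_of_real (s + c) else Complex a (-b))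
                           else (if j = 1 then Complex a b else complex_of_real (s - c)))"

definition psi2 :: "complex \<Rightarrow> complex \<Rightarrow> complex^2" where
  "psi2 a b = (\<chi> i. if i = 1 then a else b)"

lemma psi2_nth [simp]: "psi2 a b $ 1 = a" "psi2 a b $ 2 = b"
  by (simp_all add: psi2_def)

lemma qf_cadj: "qf \<psi> (cadj B) = cnj (qf \<psi> B)"
  by (simp add: qf_expand cadj_def algebra_simps)

lemma cadj_mult: "cadj (A ** B) = cadj B ** cadj (A::cmat2)"
  by (simp add: vec_eq_iff forall_2 cadj_def matrix_matrix_mult_def sum_2 mult.commute)

lemma cadj_cadj: "cadj (cadj (A::cmat2)) = A"
  by (simp add: vec_eq_iff cadj_def)

lemma qf_cscale: "qf \<psi> (cscale c B) = c * qf \<psi> B"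
  by (simp add: qf_expand cscale_def algebra_simps)

lemma qf_add: "qf \<psi> (A + B) = qf \<psi> A + qf \<psi> B"
  by (simp add: qf_expand algebra_simps)

lemma herm_of_qf:
  assumes H: "\<And>\<psi>. Im (qf \<psi> B) = 0"
  shows "B = herm_mat (Re (B$1$1 + B$2$2) / 2) (Re (B$1$2)) (- Im (B$1$2)) (Re (B$1$1 - B$2$2) / 2)"
proof -
  have h1: "Im (B$1$1) = 0" using H[of "psi2 1 0"] by (simp add: qf_expand)
  have h2: "Im (B$2$2) = 0" using H[of "psi2 0 1"] by (simp add: qf_expand)
  have h3: "Im (B$1$2) + Im (B$2$1) = 0" using H[of "psi2 1 1"] h1 h2 by (simp add: qf_expand)
  have h4: "Re (B$1$2) - Re (B$2$1) = 0" using H[of "psi2 1 \<i>"] h1 h2 by (simp add: qf_expand)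
  show ?thesis
    using h1 h2 h3 h4 by (simp add: vec_eq_iff forall_2 herm_mat_def complex_eq_iff field_simps)
qed

lemma pauli_cadj: "cadj (pauli j) = pauli j"
  using exhaust_3[of j] by (auto simp: vec_eq_iff forall_2 cadj_def pauli_def)

lemma pauli_sq: "cadj (mat 1 + pauli j) ** (mat 1 + pauli j) = cscale 2 (mat 1) + cscale 2 (pauli j)"
  using exhaust_3[of j]
  by (auto simp: vec_eq_iff forall_2 cadj_def pauli_def matrix_matrix_mult_def sum_2 cscale_def mat_def)

lemma Aj_herm:
  assumes clin: "clinear_map F" and F1: "F (mat 1) = 0"
    and diss: "\<And>X \<psi>. Im (qf \<psi> (F (cadj X ** X) - cadj (F X) ** X - cadj X ** F X)) = 0"
  shows "Im (qf \<psi> (F (pauli j))) = 0"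
proof -
  let ?X = "mat 1 + pauli j" and ?A = "F (pauli j)"
  have hX: "cadj ?X = ?X" using pauli_cadj by (simp add: vec_eq_iff cadj_def mat_def)
  have e1: "F (cadj ?X ** ?X) = cscale 2 ?A"
    using clin F1 unfolding pauli_sq clinear_map_def by (simp add: cscale_def vec_eq_iff)
  have e2: "F ?X = ?A" using clin F1 unfolding clinear_map_def by simp
  have e3: "cadj ?X ** ?A = cadj (cadj ?A ** ?X)" by (simp add: cadj_mult cadj_cadj hX)
  have "Im (qf \<psi> (F (cadj ?X ** ?X) - cadj (F ?X) ** ?X - cadj ?X ** F ?X)) = 2 * Im (qf \<psi> ?A)"
    unfolding e1 e2 e3 qf_diff qf_cscale qf_cadj by simp
  thus ?thesis using diss[where X = ?X and \<psi> = \<psi>] by simp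
qed

lemma hsip_herm_pauli:
  "hsip (herm_mat s a b c) (pauli k) = 2 * complex_of_real (if k = 1 then a else if k = 2 then b else c)"
  using exhaust_3[of k]
  by (auto simp: hsip_def herm_mat_def pauli_def complex_eq_iff)

definition xmat :: "(3 \<Rightarrow> complex) \<Rightarrow> cmat2" where
  "xmat x = cscale (x 1) (pauli 1) + cscale (x 2) (pauli 2) + cscale (x 3) (pauli 3)"

definition ccross :: "(3 \<Rightarrow> complex) \<Rightarrow> 3 \<Rightarrow> complex" where
  "ccross x l = (if l = 1 then cnj (x 2) * x 3 - cnj (x 3) * x 2 else if l = 2 then cnj (x 3) * x 1 - cnj (x 1) * x 3
                 else cnj (x 1) * x 2 - cnj (x 2) * x 1)"

lemma xmat_sq: "cadj (xmat x) ** xmat x = cscale (cnj (x 1) * x 1 + cnj (x 2) * x 2 + cnj (x 3) * x 3) (mat 1)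
   + cscale (\<i> * ccross x 1) (pauli 1) + cscale (\<i> * ccross x 2) (pauli 2) + cscale (\<i> * ccross x 3) (pauli 3)"
  by (simp add: vec_eq_iff forall_2 cadj_def xmat_def ccross_def pauli_def matrix_matrix_mult_def sum_2 cscale_def mat_def algebra_simps)

definition crossv :: "(3 \<Rightarrow> real) \<Rightarrow> (3 \<Rightarrow> real) \<Rightarrow> 3 \<Rightarrow> real" where
  "crossv u v k = (if k = 1 then u 2 * v 3 - u 3 * v 2 else if k = 2 then u 3 * v 1 - u 1 * v 3 else u 1 * v 2 - u 2 * v 1)"
definition dotv :: "(3 \<Rightarrow> real) \<Rightarrow> (3 \<Rightarrow> real) \<Rightarrow> real" where
  "dotv u v = u 1 * v 1 + u 2 * v 2 + u 3 * v 3"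
definition qM :: "(3 \<Rightarrow> 3 \<Rightarrow> real) \<Rightarrow> (3 \<Rightarrow> real) \<Rightarrow> real" where
  "qM m w = (\<Sum>j\<in>UNIV. \<Sum>k\<in>UNIV. w j * m j k * w k)"
definition trM :: "(3 \<Rightarrow> 3 \<Rightarrow> real) \<Rightarrow> real" where
  "trM m = m 1 1 + m 2 2 + m 3 3"
definition aa :: "(3 \<Rightarrow> 3 \<Rightarrow> real) \<Rightarrow> (3 \<Rightarrow> real) \<Rightarrow> (3 \<Rightarrow> real) \<Rightarrow> (3 \<Rightarrow> real) \<Rightarrow> real" where
  "aa m s u v = -2*(qM m u + qM m v) - 2 * dotv s (crossv u v)"
definition bb :: "(3 \<Rightarrow> 3 \<Rightarrow> real) \<Rightarrow> (3 \<Rightarrow> real) \<Rightarrow> (3 \<Rightarrow> real) \<Rightarrow> (3 \<Rightarrow> real) \<Rightarrow> 3 \<Rightarrow> real" where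
  "bb m s u v k = 2*(trM m * crossv u v k - (\<Sum>j\<in>UNIV. (m k j + m j k) * crossv u v j)) - 2*(dotv s u * u k + dotv s v * v k)"

lemma Dform:
  fixes m :: "3 \<Rightarrow> 3 \<Rightarrow> real" and s u v :: "3 \<Rightarrow> real"
  defines "A \<equiv> \<lambda>j. herm_mat (s j) (m j 1) (m j 2) (m j 3)"
  defines "x \<equiv> \<lambda>j. Complex (u j) (v j)"
  shows "cscale (\<i> * ccross x 1) (A 1) + cscale (\<i> * ccross x 2) (A 2) + cscale (\<i> * ccross x 3) (A 3)
     - cadj (cscale (x 1) (A 1) + cscale (x 2) (A 2) + cscale (x 3) (A 3)) ** xmat x
     - cadj (xmat x) ** (cscale (x 1) (A 1) + cscale (x 2) (A 2) + cscale (x 3) (A 3))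
   = herm_mat (aa m s u v) (bb m s u v 1) (bb m s u v 2) (bb m s u v 3)"
  unfolding A_def x_def
  apply (simp add: vec_eq_iff forall_2 cadj_def xmat_def ccross_def pauli_def matrix_matrix_mult_def sum_2 cscale_def herm_mat_def)
  apply (simp add: complex_eq_iff aa_def bb_def qM_def trM_def dotv_def crossv_def sum_3)
  apply (intro conjI; simp add: algebra_simps)
  done

lemma qf_bloch_a:
  assumes "\<mu>^2 = dotv mv mv"
  shows "Re (qf (psi2 (complex_of_real (\<mu> + mv 3)) (Complex (mv 1) (mv 2))) (herm_mat a b1 b2 b3))
     = (\<mu> + mv 3) * (2*a*\<mu> + 2*(b1 * mv 1 + b2 * mv 2 + b3 * mv 3))"
proof -
  have "Re (qf (psi2 (complex_of_real (\<mu> + mv 3)) (Complex (mv 1) (mv 2))) (herm_mat a b1 b2 b3))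
     - (\<mu> + mv 3) * (2*a*\<mu> + 2*(b1 * mv 1 + b2 * mv 2 + b3 * mv 3)) = (a - b3) * (dotv mv mv - \<mu>^2)"
    by (simp add: qf_expand herm_mat_def dotv_def power2_eq_square algebra_simps)
  thus ?thesis using assms by simp
qed

lemma qf_bloch_b:
  assumes "\<mu>^2 = dotv mv mv"
  shows "Re (qf (psi2 (Complex (mv 1) (- mv 2)) (complex_of_real (\<mu> - mv 3))) (herm_mat a b1 b2 b3))
     = (\<mu> - mv 3) * (2*a*\<mu> + 2*(b1 * mv 1 + b2 * mv 2 + b3 * mv 3))"
proof -
  have "Re (qf (psi2 (Complex (mv 1) (- mv 2)) (complex_of_real (\<mu> - mv 3))) (herm_mat a b1 b2 b3))
     - (\<mu> - mv 3) * (2*a*\<mu> + 2*(b1 * mv 1 + b2 * mv 2 + b3 * mv 3)) = (a + b3) * (dotv mv mv - \<mu>^2)"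
    by (simp add: qf_expand herm_mat_def dotv_def power2_eq_square algebra_simps)
  thus ?thesis using assms by simp
qed

lemma posA:
  assumes P: "\<And>\<psi>. Re (qf \<psi> (herm_mat a b1 b2 b3)) \<ge> 0" and mu: "\<mu> > 0" "\<mu>^2 = dotv mv mv"
  shows "a*\<mu> + (b1 * mv 1 + b2 * mv 2 + b3 * mv 3) \<ge> 0"
proof -
  define Z where "Z = 2*a*\<mu> + 2*(b1 * mv 1 + b2 * mv 2 + b3 * mv 3)"
  have "(\<mu> + mv 3) * Z \<ge> 0" using P qf_bloch_a[OF mu(2)] unfolding Z_def by metis
  moreover have "(\<mu> - mv 3) * Z \<ge> 0" using P qf_bloch_b[OF mu(2)] unfolding Z_def by metis
  ultimately have "(2*\<mu>) * Z \<ge> 0" by (simp add: algebra_simps)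
  hence "Z \<ge> 0" using mu(1) by (simp add: zero_le_mult_iff)
  thus ?thesis unfolding Z_def by simp
qed

lemma Aprime:
  assumes P: "\<And>u v \<psi>. Re (qf \<psi> (herm_mat (aa m s u v) (bb m s u v 1) (bb m s u v 2) (bb m s u v 3))) \<ge> 0"
    and mu: "\<mu> > 0" "\<mu>^2 = dotv mv mv"
  shows "- \<mu> * (qM m u + qM m v) + (\<Sum>k\<in>UNIV. mv k * (trM m * crossv u v k - (\<Sum>j\<in>UNIV. (m k j + m j k) * crossv u v j))) \<ge> 0"
proof -
  let ?v' = "\<lambda>k. - v k" and ?m' = "\<lambda>k. - mv k"
  have 1: "aa m s u v * \<mu> + (bb m s u v 1 * mv 1 + bb m s u v 2 * mv 2 + bb m s u v 3 * mv 3) \<ge> 0"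
    by (rule posA[OF P mu])
  have mu2: "\<mu>^2 = dotv ?m' ?m'" using mu(2) by (simp add: dotv_def)
  have 2: "aa m s u ?v' * \<mu> + (bb m s u ?v' 1 * ?m' 1 + bb m s u ?v' 2 * ?m' 2 + bb m s u ?v' 3 * ?m' 3) \<ge> 0"
    by (rule posA[OF P mu(1) mu2])
  have ea: "aa m s u v + aa m s u ?v' = -4*(qM m u + qM m v)"
    by (simp add: aa_def qM_def crossv_def dotv_def sum_3 algebra_simps)
  have eb: "bb m s u v k - bb m s u ?v' k = 4*(trM m * crossv u v k - (\<Sum>j\<in>UNIV. (m k j + m j k) * crossv u v j))" for k
    by (simp add: bb_def crossv_def dotv_def sum_3 algebra_simps)
  have "0 \<le> (aa m s u v + aa m s u ?v') * \<mu> + ((bb m s u v 1 - bb m s u ?v' 1) * mv 1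
      + (bb m s u v 2 - bb m s u ?v' 2) * mv 2 + (bb m s u v 3 - bb m s u ?v' 3) * mv 3)"
    using 1 2 by (simp add: algebra_simps)
  also have "\<dots> = 4 * (- \<mu> * (qM m u + qM m v) + (\<Sum>k\<in>UNIV. mv k * (trM m * crossv u v k - (\<Sum>j\<in>UNIV. (m k j + m j k) * crossv u v j))))"
    unfolding ea eb by (simp add: sum_3 algebra_simps)
  finally show ?thesis by simp
qed

lemma I1: "crossv (\<lambda>k. t * crossv w e k) (crossv w (crossv w e)) = (\<lambda>k. t * dotv (crossv w e) (crossv w e) * w k)"
  apply (rule ext)
  subgoal for k using exhaust_3[of k] by (auto simp: crossv_def dotv_def algebra_simps)
  done

lemma I2: "dotv w w * qM m (crossv w e) + qM m (crossv w (crossv w e))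
   = dotv (crossv w e) (crossv w e) * (dotv w w * trM m - qM m w)"
  by (simp add: crossv_def dotv_def qM_def trM_def sum_3 algebra_simps)

lemma qM_scale: "qM m (\<lambda>k. t * p k) = t^2 * qM m p"
  by (simp add: qM_def sum_3 power2_eq_square algebra_simps)

lemma Bbound:
  assumes P: "\<And>u v \<psi>. Re (qf \<psi> (herm_mat (aa m s u v) (bb m s u v 1) (bb m s u v 2) (bb m s u v 3))) \<ge> 0"
  shows "3 * qM m w \<ge> 2 * dotv w w * trM m"
proof (cases "dotv w w = 0")
  case True
  hence "w 1 = 0 \<and> w 2 = 0 \<and> w 3 = 0" unfolding dotv_def by (simp add: add_nonneg_eq_0_iff)
  thus ?thesis using True by (simp add: qM_def sum_3)
next
  case False
  define W where "W = dotv w w"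
  have "W \<ge> 0" unfolding W_def dotv_def by (intro add_nonneg_nonneg) auto
  hence Wp: "W > 0" using False unfolding W_def by (simp add: less_le)
  obtain e where rho: "dotv (crossv w e) (crossv w e) > 0"
  proof (cases "w 1 = 0 \<and> w 2 = 0")
    case True
    hence "w 3 \<noteq> 0" using Wp unfolding W_def dotv_def by auto
    hence "dotv (crossv w (\<lambda>k. if k = 1 then 1 else 0)) (crossv w (\<lambda>k. if k = 1 then 1 else 0)) > 0"
      using True by (auto simp: dotv_def crossv_def zero_less_mult_iff linorder_neq_iff)
    thus ?thesis by (rule that)
  next
    case False
    hence "0 < w 2 * w 2 + w 1 * w 1" using sum_squares_gt_zero_iff[of "w 2" "w 1"] by blast
    hence "dotv (crossv w (\<lambda>k. if k = 3 then 1 else 0)) (crossv w (\<lambda>k. if k = 3 then 1 else 0)) > 0"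
      by (simp add: dotv_def crossv_def)
    thus ?thesis by (rule that)
  qed
  define p where "p = crossv w e"
  define \<rho> where "\<rho> = dotv p p"
  define t where "t = sqrt W"
  have tp: "t > 0" using Wp by (simp add: t_def)
  have t2: "t^2 = W" using Wp by (simp add: t_def)
  have mu2: "t^2 = dotv (\<lambda>k. - w k) (\<lambda>k. - w k)" using t2 by (simp add: W_def dotv_def)
  have A: "- t * (qM m (\<lambda>k. t * p k) + qM m (crossv w p)) + (\<Sum>k\<in>UNIV. (- w k) * (trM m * crossv (\<lambda>k. t * p k) (crossv w p) k
     - (\<Sum>j\<in>UNIV. (m k j + m j k) * crossv (\<lambda>k. t * p k) (crossv w p) j))) \<ge> 0"
    by (rule Aprime[OF P tp mu2])
  have c: "crossv (\<lambda>k. t * p k) (crossv w p) = (\<lambda>k. t * \<rho> * w k)"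
    unfolding p_def \<rho>_def by (rule I1)
  have q: "qM m (\<lambda>k. t * p k) + qM m (crossv w p) = \<rho> * (W * trM m - qM m w)"
    unfolding qM_scale t2 unfolding p_def \<rho>_def W_def by (rule I2)
  have "(\<Sum>k\<in>UNIV. (- w k) * (trM m * (t * \<rho> * w k) - (\<Sum>j\<in>UNIV. (m k j + m j k) * (t * \<rho> * w j))))
      = - t * \<rho> * (trM m * W - 2 * qM m w)"
    by (simp add: W_def dotv_def qM_def sum_3 algebra_simps)
  hence "0 \<le> - t * (\<rho> * (W * trM m - qM m w)) - t * \<rho> * (trM m * W - 2 * qM m w)"
    using A unfolding c q by simp
  also have "\<dots> = (t * \<rho>) * (3 * qM m w - 2 * W * trM m)" by (simp add: algebra_simps)
  finally have "0 \<le> (t * \<rho>) * (3 * qM m w - 2 * W * trM m)" .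
  moreover have "t * \<rho> > 0" using tp rho by (simp add: \<rho>_def p_def)
  ultimately have "0 \<le> 3 * qM m w - 2 * W * trM m" by (simp add: zero_le_mult_iff)
  thus ?thesis by (simp add: W_def)
qed




lemma prod3: "(\<Prod>k\<in>(UNIV::3 set). f k) = f 1 * f 2 * f 3"
  unfolding UNIV_3 by (simp add: mult.assoc)

lemma poly_char: "poly (char_poly3 M) z = det ((\<chi> i j. (if i = j then z else 0) - M$i$j) :: complex^3^3)"
  unfolding char_poly3_def det_3 apply simp by algebra

lemma prod_comb: "(1 - a) * (1 - b) * (1 - c) + (-1 - a) * (-1 - b) * (-1 - c) - 2 * ((0 - a) * (0 - b) * (0 - c))
   = -2 * (a + b + (c::complex))"
  by (simp add: algebra_simps)

lemma trace_eq:
  fixes ev :: "3 \<Rightarrow> complex"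
  assumes "char_poly3 M = (\<Prod>k\<in>UNIV. [:- ev k, 1:])"
  shows "ev 1 + ev 2 + ev 3 = M$1$1 + M$2$2 + M$3$3"
proof -
  define D where "D z = det ((\<chi> i j. (if i = j then z else 0) - M$i$j) :: complex^3^3)" for z
  have h: "D z = (z - ev 1) * (z - ev 2) * (z - ev 3)" for z
  proof -
    have "poly (\<Prod>k\<in>UNIV. [:- ev k, 1:]) z = (z - ev 1) * (z - ev 2) * (z - ev 3)"
      unfolding poly_prod prod3 by (simp add: algebra_simps)
    thus ?thesis using arg_cong[OF assms, of "\<lambda>p. poly p z"] unfolding poly_char D_def by simp
  qed
  have "D 1 + D (-1) - 2 * D 0 = -2 * (M$1$1 + M$2$2 + M$3$3)"
    unfolding D_def det_3 by (simp add: algebra_simps)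
  hence "-2 * (M$1$1 + M$2$2 + M$3$3) = -2 * (ev 1 + ev 2 + ev 3)"
    unfolding h prod_comb by simp
  thus ?thesis by (metis mult_cancel_left neg_equal_0_iff_equal zero_neq_numeral)
qed

lemma eig_bound:
  fixes m :: "3 \<Rightarrow> 3 \<Rightarrow> real" and M :: "complex^3^3"
  assumes Mm: "\<And>i j. M$i$j = complex_of_real (m i j)"
    and B: "\<And>w. 3 * qM m w \<ge> 2 * dotv w w * trM m"
    and d: "det ((\<chi> i j. (if i = j then lam else 0) - M$i$j) :: complex^3^3) = 0"
  shows "3 * Re lam \<ge> 2 * trM m"
proof -
  let ?A = "(\<chi> i j. (if i = j then lam else 0) - M$i$j) :: complex^3^3"
  have "\<not> invertible ?A" using d invertible_det_nz by blast
  hence "\<not> (\<exists>B. B ** ?A = mat 1)" using invertible_left_inverse by blast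
  then obtain x where x: "?A *v x = 0" "x \<noteq> 0" using matrix_left_invertible_ker by blast
  have E: "lam * x$i = M$i$1 * x$1 + M$i$2 * x$2 + M$i$3 * x$3" for i
  proof -
    have "(?A *v x)$i = 0" using x by simp
    thus ?thesis using exhaust_3[of i]
      by (auto simp: matrix_vector_mult_def sum_3 algebra_simps)
  qed
  define p where "p j = Re (x$j)" for j
  define q where "q j = Im (x$j)" for j
  define N where "N = dotv p p + dotv q q"
  have key: "Re lam * N = qM m p + qM m q"
  proof -
    have "Re (cnj (x$1) * (lam * x$1) + cnj (x$2) * (lam * x$2) + cnj (x$3) * (lam * x$3))
        = Re (cnj (x$1) * (M$1$1 * x$1 + M$1$2 * x$2 + M$1$3 * x$3) + cnj (x$2) * (M$2$1 * x$1 + M$2$2 * x$2 + M$2$3 * x$3)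
            + cnj (x$3) * (M$3$1 * x$1 + M$3$2 * x$2 + M$3$3 * x$3))"
      by (simp only: E)
    thus ?thesis
      by (simp add: Mm N_def p_def q_def dotv_def qM_def sum_3 algebra_simps)
  qed
  have Np: "N > 0"
  proof -
    obtain i where "x$i \<noteq> 0" using x(2) by (auto simp: vec_eq_iff)
    hence "p i \<noteq> 0 \<or> q i \<noteq> 0" by (simp add: p_def q_def complex_eq_iff)
    hence "p i * p i + q i * q i > 0" by (simp add: sum_squares_gt_zero_iff)
    moreover have "N \<ge> p i * p i + q i * q i"
      using exhaust_3[of i] unfolding N_def dotv_def by auto
    ultimately show ?thesis by linarith
  qed
  have "3 * (qM m p + qM m q) \<ge> 2 * trM m * N"
    using B[of p] B[of q] unfolding N_def by (simp add: algebra_simps)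
  hence "(2 * trM m) * N \<le> (3 * Re lam) * N" using key by (simp add: algebra_simps)
  thus ?thesis using Np mult_le_cancel_right_pos by blast
qed

lemma cscale_zero [simp]: "cscale c (0::cmat2) = 0"
  by (simp add: cscale_def vec_eq_iff)

theorem theorem1:
  fixes L :: "cmat2 \<Rightarrow> cmat2" and ev :: "3 \<Rightarrow> complex"
  assumes lin: "clinear_map L"
    and tp: "\<forall>X. mtrace (L X) = 0"
    and schwarz: "\<forall>t::real. t \<ge> 0 \<longrightarrow> unital_schwarz (map_exp t (hs_dual L))"
    and eig: "char_poly3 (restr_T_matrix L) = (\<Prod>k\<in>UNIV. [:- ev k, 1:])"
  shows "\<forall>k. - Re (ev k) \<le> 2/3 * (\<Sum>j\<in>UNIV. - Re (ev j))"
proof -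
  define F where "F = dualf L"
  have hd: "hs_dual L = F" using hs_dual_eq[OF lin] F_def by simp
  have clF: "clinear_map F" unfolding F_def by (rule dualf_clinear)
  have blF: "bounded_linear F" by (rule clinear_bounded[OF clF])
  have F1: "F (mat 1) = 0"
  proof -
    have h: "L (Emat i j) $1$1 + L (Emat i j) $2$2 = 0" for i j
      using tp by (simp add: mtrace_def sum_2)
    have "cnj (L (Emat i j) $1$1) + cnj (L (Emat i j) $2$2) = 0" for i j
      using h[of i j] by (metis complex_cnj_add complex_cnj_zero)
    thus ?thesis unfolding F_def dualf_def hsip_def by (simp add: vec_eq_iff mat_def)
  qed
  have S: "\<And>X t. t \<ge> 0 \<Longrightarrow> psd (map_exp t F (cadj X ** X) - cadj (map_exp t F X) ** map_exp t F X)"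
    using schwarz unfolding hd unital_schwarz_def by blast
  have diss: "Re (qf \<psi> (F (cadj X ** X) - cadj (F X) ** X - cadj X ** F X)) \<ge> 0 \<and>
         Im (qf \<psi> (F (cadj X ** X) - cadj (F X) ** X - cadj X ** F X)) = 0" for X \<psi>
    by (rule dissip[OF blF S])
  have herm: "\<And>\<psi>. Im (qf \<psi> (F (pauli j))) = 0" for j
    by (rule Aj_herm[OF clF F1]) (use diss in blast)
  define s where "s (j::3) = Re (F (pauli j)$1$1 + F (pauli j)$2$2) / 2" for j
  define m where "m (j::3) (k::3) = (if k = 1 then Re (F (pauli j)$1$2) else if k = 2 then - Im (F (pauli j)$1$2)
       else Re (F (pauli j)$1$1 - F (pauli j)$2$2) / 2)" for j k
  have Aform: "F (pauli j) = herm_mat (s j) (m j 1) (m j 2) (m j 3)" for j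
    using herm_of_qf[of "F (pauli j)", OF herm] unfolding s_def m_def by simp
  have Mm: "restr_T_matrix L $ j $ k = complex_of_real (m j k)" for j k
  proof -
    have "mtrace (pauli j ** L (pauli k)) = hsip (F (pauli j)) (pauli k)"
      using mtrace_cadj[of "pauli j" "L (pauli k)"] dual_prop[OF lin, of "pauli j" "pauli k"]
      unfolding pauli_cadj F_def by simp
    also have "\<dots> = 2 * complex_of_real (m j k)"
      unfolding Aform hsip_herm_pauli using exhaust_3[of k] by auto
    finally show ?thesis by (simp add: restr_T_matrix_def)
  qed
  have P: "Re (qf \<psi> (herm_mat (aa m s u v) (bb m s u v 1) (bb m s u v 2) (bb m s u v 3))) \<ge> 0" for u v \<psi>
  proof -
    define x where "x = (\<lambda>j. Complex (u j) (v j))"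
    define A where "A = (\<lambda>j. herm_mat (s j) (m j 1) (m j 2) (m j 3))"
    have FX: "F (xmat x) = cscale (x 1) (A 1) + cscale (x 2) (A 2) + cscale (x 3) (A 3)"
      using clF unfolding xmat_def clinear_map_def A_def by (simp add: Aform)
    have FXX: "F (cadj (xmat x) ** xmat x) = cscale (\<i> * ccross x 1) (A 1) + cscale (\<i> * ccross x 2) (A 2) + cscale (\<i> * ccross x 3) (A 3)"
      using clF F1 unfolding xmat_sq clinear_map_def A_def by (simp add: Aform)
    have "Re (qf \<psi> (F (cadj (xmat x) ** xmat x) - cadj (F (xmat x)) ** xmat x - cadj (xmat x) ** F (xmat x))) \<ge> 0"
      using diss by blast
    moreover have "F (cadj (xmat x) ** xmat x) - cadj (F (xmat x)) ** xmat x - cadj (xmat x) ** F (xmat x)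
       = herm_mat (aa m s u v) (bb m s u v 1) (bb m s u v 2) (bb m s u v 3)"
      unfolding FX FXX unfolding A_def x_def by (rule Dform)
    ultimately show ?thesis by simp
  qed
  have Bw: "\<And>w. 3 * qM m w \<ge> 2 * dotv w w * trM m" by (rule Bbound[OF P])
  have trR: "Re (ev 1) + Re (ev 2) + Re (ev 3) = trM m"
  proof -
    have "ev 1 + ev 2 + ev 3 = restr_T_matrix L $1$1 + restr_T_matrix L $2$2 + restr_T_matrix L $3$3"
      by (rule trace_eq[OF eig])
    hence "Re (ev 1 + ev 2 + ev 3) = Re (restr_T_matrix L $1$1 + restr_T_matrix L $2$2 + restr_T_matrix L $3$3)" by simp
    thus ?thesis by (simp add: Mm trM_def)
  qed
  have ek: "3 * Re (ev k) \<ge> 2 * trM m" for k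
  proof (rule eig_bound[OF Mm Bw])
    have "poly (\<Prod>k\<in>UNIV. [:- ev k, 1:]) (ev k) = 0"
    proof -
      have pe: "poly [:- ev i, 1:] (ev k) = ev k - ev i" for i by simp
      show ?thesis unfolding prod3 poly_mult pe using exhaust_3[of k] by (elim disjE; simp only: diff_self mult_zero_left mult_zero_right)
    qed
    thus "det ((\<chi> i j. (if i = j then ev k else 0) - restr_T_matrix L $ i $ j) :: complex^3^3) = 0"
      using eig poly_char by metis
  qed
  show ?thesis
  proof
    fix k
    have "3 * Re (ev k) \<ge> 2 * (Re (ev 1) + Re (ev 2) + Re (ev 3))" using ek[of k] trR by simp
    thus "- Re (ev k) \<le> 2/3 * (\<Sum>j\<in>UNIV. - Re (ev j))" by (simp add: sum_3)
  qed
qed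


end
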